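(* Every class $[\mathfrak{p}]\in\mathfrak{F}_4''$ contains a unique quadruple of the form $$p_1=(1,\tan a),\quad p_2=\infty,\quad p_3=(0,0),\quad p_4=(z,t),$$ where $a\in(-\pi/2,\pi/2)$ (in fact $a=\mathbb{A}(p_1,p_2,p_3)$), $z\in\mathbb{C}\setminus\{0\}$, $t\in\mathbb{R}$ and $t\neq |z|^2\tan a$. The map $\mathcal{B}_0:\mathfrak{F}_4''\to\mathcal{C}'(\mathfrak{H}^\star)$, $\mathcal{B}_0([\mathfrak{p}])=(z,t,e^{\tan a})$, is a well-defined bijection onto $$\mathcal{C}'(\mathfrak{H}^\star)=\{(z,t,r)\in(\mathbb{C}\setminus\{0\})\times\mathbb{R}\times\mathbb{R}_{>0}\;:\;\log r\neq t/|z|^2\}.$$ Consequently $\mathfrak{F}_4''$ inherits (by transport of structure via $\mathcal{B}_0$) the Kähler structure of the open subset $\mathcal{C}'(\mathfrak{H}^\star)$ of the Riemannian cone $\mathcal{C}(\mathfrak{H}^\star)$.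
   Context: Let $\mathbb{C}^{2,1}$ denote $\mathbb{C}^3$ with the Hermitian form $\langle \mathbf z,\mathbf w\rangle=z_1\overline{w_3}+z_2\overline{w_2}+z_3\overline{w_1}$. The boundary $\partial\mathbf{H}^2_\mathbb{C}$ of complex hyperbolic plane is the set of complex lines of null vectors; it is identified with $(\mathbb{C}\times\mathbb{R})\cup\{\infty\}$, where $(z,t)$ corresponds to the line spanned by $(-|z|^2+it,\sqrt2 z,1)^T$ and $\infty$ to the line spanned by $(1,0,0)^T$. The group ${\rm PU}(2,1)$ (projectivised unitary group of $\langle\cdot,\cdot\rangle$) acts on $\partial\mathbf{H}^2_\mathbb{C}$. A $\mathbb{C}$-circle is the intersection of $\partial\mathbf{H}^2_\mathbb{C}$ with the projectivisation of a complex 2-dimensional subspace of $\mathbb{C}^{2,1}$ on which the form has signature $(1,1)$ (i.e. the boundary of a complex geodesic). Cartan's angular invariant of a triple of distinct boundary points with lifts $\mathbf p_i$ is $\mathbb{A}(p_1,p_2,p_3)=\arg\left(-\langle\mathbf p_1,\mathbf p_2\rangle\langle\mathbf p_2,\mathbf p_3\rangle\langle\mathbf p_3,\mathbf p_1\rangle\right)\in[-\pi/2,\pi/2]$. Let $\mathfrak{C}_4''$ be the set of ordered quadruples $\mathfrak{p}=(p_1,p_2,p_3,p_4)$ of pairwise distinct points of $\partial\mathbf{H}^2_\mathbb{C}$ such that: $p_1,p_2,p_3$ do not lie on a common $\mathbb{C}$-circle; $p_2,p_3,p_4$ do not lie on a common $\mathbb{C}$-circle; and $p_4$ is not in the orbit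 of $p_1$ under the subgroup of ${\rm PU}(2,1)$ fixing $p_2$ and $p_3$. Let $\mathfrak{F}_4''=\mathfrak{C}_4''/{\rm PU}(2,1)$ (diagonal action). The affine-rotational group $\mathfrak{H}^\star$ is $(\mathbb{C}\setminus\{0\})\times\mathbb{R}$ with product $(z,t)\star(w,s)=(zw,t+s|z|^2)$. On it, with $z=x+iy$, let $\mathbf{X}=x\partial_x+y\partial_y$, $\mathbf{Y}=x\partial_y-y\partial_x-2|z|^2\partial_t$, $\mathbf{T}=x\partial_y-y\partial_x$, let $\omega^\star=\frac{dt+2x\,dy-2y\,dx}{2|z|^2}$, and let $g^\star$ be the Riemannian metric for which $\{\mathbf X,\mathbf Y,\mathbf T\}$ is orthonormal. The Riemannian cone is $\mathcal{C}(\mathfrak{H}^\star)=\mathfrak{H}^\star\times\mathbb{R}_{>0}$ with metric $dr^2+r^2g^\star$, almost complex structure $\mathbb{J}\mathbf X=\mathbf Y$, $\mathbb{J}\mathbf Y=-\mathbf X$, $\mathbb{J}\mathbf T=-r\partial_r$, $\mathbb{J}(r\partial_r)=\mathbf T$, and 2-form $d(r^2\omega^\star/2)$; this is a Kähler manifold. *)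

theory Defs
  imports "HOL-Analysis.Analysis"
begin

text \<open>Vectors of C^{2,1} are elements of complex^3; the Hermitian form of signature (2,1).\<close>

definition herm :: "complex^3 \<Rightarrow> complex^3 \<Rightarrow> complex" where
  "herm v w = v$1 * cnj (w$3) + v$2 * cnj (w$2) + v$3 * cnj (w$1)"

definition vec3 :: "complex \<Rightarrow> complex \<Rightarrow> complex \<Rightarrow> complex^3" where
  "vec3 a b c = (\<chi> i. if i = 1 then a else if i = 2 then b else c)"

text \<open>Boundary points: None is \<infinity>, Some (z,t) is the Heisenberg point (z,t).\<close>
type_synonym bpt = "(complex \<times> real) option"

definition lift :: "bpt \<Rightarrow> complex^3" where
  "lift p = (case p of None \<Rightarrow> vec3 1 0 0
     | Some (z, t) \<Rightarrow> vec3 (- complex_of_real ((cmod z)\<^sup>2) + \<i> * complex_of_real t)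
                          (complex_of_real (sqrt 2) * z) 1)"

text \<open>The unitary group U(2,1) of the form (PU(2,1) acts through it).\<close>
definition U21 :: "(complex^3^3) set" where
  "U21 = {A. invertible A \<and> (\<forall>v w. herm (A *v v) (A *v w) = herm v w)}"

definition acts :: "complex^3^3 \<Rightarrow> bpt \<Rightarrow> bpt \<Rightarrow> bool" where
  "acts A p q \<longleftrightarrow> (\<exists>c. c \<noteq> 0 \<and> A *v lift p = c *s lift q)"

type_synonym quad = "bpt \<times> bpt \<times> bpt \<times> bpt"

definition pu_equiv :: "quad \<Rightarrow> quad \<Rightarrow> bool" where
  "pu_equiv p q \<longleftrightarrow> (case p of (p1, p2, p3, p4) \<Rightarrow> case q of (q1, q2, q3, q4) \<Rightarrow>
      (\<exists>A\<in>U21. acts A p1 q1 \<and> acts A p2 q2 \<and> acts A p3 q3 \<and> acts A p4 q4))"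

text \<open>C-circles: boundaries of complex geodesics, i.e. boundary points whose lifts lie in
  a complex 2-dimensional subspace on which the form has signature (1,1) (given by a
  basis u, w with h(u,u)=1, h(w,w)=-1, h(u,w)=0).\<close>
definition C_circles :: "bpt set set" where
  "C_circles = {{p. \<exists>a b. lift p = a *s u + b *s w} | u w.
      herm u u = 1 \<and> herm w w = -1 \<and> herm u w = 0}"

definition on_C_circle :: "bpt \<Rightarrow> bpt \<Rightarrow> bpt \<Rightarrow> bool" where
  "on_C_circle p q r \<longleftrightarrow> (\<exists>C\<in>C_circles. p \<in> C \<and> q \<in> C \<and> r \<in> C)"

definition cartan :: "bpt \<Rightarrow> bpt \<Rightarrow> bpt \<Rightarrow> real" where
  "cartan p1 p2 p3 = Arg (- (herm (lift p1) (lift p2) * herm (lift p2) (lift p3)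
                             * herm (lift p3) (lift p1)))"

definition C4'' :: "quad set" where
  "C4'' = {(p1, p2, p3, p4). p1 \<noteq> p2 \<and> p1 \<noteq> p3 \<and> p1 \<noteq> p4 \<and> p2 \<noteq> p3 \<and> p2 \<noteq> p4 \<and> p3 \<noteq> p4
      \<and> \<not> on_C_circle p1 p2 p3 \<and> \<not> on_C_circle p2 p3 p4
      \<and> \<not> (\<exists>A\<in>U21. acts A p2 p2 \<and> acts A p3 p3 \<and> acts A p1 p4)}"

definition F4'' :: "quad set set" where
  "F4'' = C4'' // {(p, q). p \<in> C4'' \<and> q \<in> C4'' \<and> pu_equiv p q}"

definition NF :: "real \<Rightarrow> complex \<Rightarrow> real \<Rightarrow> quad" where
  "NF a z t = (Some (1, tan a), None, Some (0, 0), Some (z, t))"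

definition C'_Hstar :: "(complex \<times> real \<times> real) set" where
  "C'_Hstar = {(z, t, r). z \<noteq> 0 \<and> r > 0 \<and> ln r \<noteq> t / (cmod z)\<^sup>2}"

end

theory Submission
  imports Defs
begin

lemma three_neq [simp]: "(1::3) \<noteq> 2" "(1::3) \<noteq> 3" "(2::3) \<noteq> 3" "(2::3) \<noteq> 1" "(3::3) \<noteq> 1" "(3::3) \<noteq> 2"
  by (simp_all add: eq_commute)

lemma vec3_nth [simp]: "vec3 a b c $ 1 = a" "vec3 a b c $ 2 = b" "vec3 a b c $ 3 = c"
  by (simp_all add: vec3_def)

lemma vec3_eq_iff: "(v::complex^3) = w \<longleftrightarrow> v$1 = w$1 \<and> v$2 = w$2 \<and> v$3 = w$3"
  by (simp add: vec_eq_iff forall_3)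

lemma herm_add_left: "herm (x + y) w = herm x w + herm y w"
  by (simp add: herm_def algebra_simps)
lemma herm_add_right: "herm w (x + y) = herm w x + herm w y"
  by (simp add: herm_def algebra_simps)
lemma herm_scale_left: "herm (c *s x) w = c * herm x w"
  by (simp add: herm_def algebra_simps)
lemma herm_scale_right: "herm w (c *s x) = cnj c * herm w x"
  by (simp add: herm_def algebra_simps)
lemma herm_sym: "herm w v = cnj (herm v w)"
  by (simp add: herm_def algebra_simps)
lemma herm_zero [simp]: "herm 0 w = 0" "herm w 0 = 0"
  by (simp_all add: herm_def)

definition hp :: "complex^3^3 \<Rightarrow> bool" where
  "hp A \<longleftrightarrow> (\<forall>v w. herm (A *v v) (A *v w) = herm v w)"

lemma herm_nondeg: assumes "\<And>w. herm x w = 0" shows "x = 0"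
proof -
  have "herm x (vec3 0 0 1) = 0" "herm x (vec3 0 1 0) = 0" "herm x (vec3 1 0 0) = 0" using assms by auto
  then show ?thesis by (simp add: herm_def vec3_eq_iff)
qed

lemma hp_inj: assumes "hp A" "A *v x = 0" shows "x = 0"
proof (rule herm_nondeg)
  fix w have "herm x w = herm (A *v x) (A *v w)" using assms(1) by (simp add: hp_def)
  then show "herm x w = 0" using assms(2) by simp
qed

lemma hp_inv: assumes "hp A" obtains B where "B ** A = mat 1" "A ** B = mat 1"
proof -
  have "\<exists>B. B ** A = mat 1" unfolding matrix_left_invertible_ker using hp_inj[OF assms] by blast
  then obtain B where "B ** A = mat 1" by blast
  moreover then have "A ** B = mat 1" using matrix_left_right_inverse by blast
  ultimately show ?thesis using that by blast
qed

lemma U21_iff: "A \<in> U21 \<longleftrightarrow> hp A"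
proof
  assume "hp A" then obtain B where "B ** A = mat 1" "A ** B = mat 1" by (rule hp_inv)
  then have "invertible A" unfolding invertible_def by blast
  then show "A \<in> U21" using \<open>hp A\<close> unfolding U21_def hp_def by blast
qed (simp add: U21_def hp_def)

lemma hp_mult: "hp A \<Longrightarrow> hp B \<Longrightarrow> hp (A ** B)"
  by (simp add: hp_def flip: matrix_vector_mul_assoc)

lemma hp_inverse: assumes "hp A" "A ** B = mat 1" shows "hp B"
  unfolding hp_def
proof (intro allI)
  fix v w
  have "herm (B *v v) (B *v w) = herm (A *v (B *v v)) (A *v (B *v w))" using assms(1) by (simp add: hp_def)
  also have "\<dots> = herm v w" by (simp add: matrix_vector_mul_assoc assms(2))
  finally show "herm (B *v v) (B *v w) = herm v w" .
qed

lemma hp_one: "hp (mat 1)" by (simp add: hp_def)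

definition cols :: "complex^3 \<Rightarrow> complex^3 \<Rightarrow> complex^3 \<Rightarrow> complex^3^3" where
  "cols f1 f2 f3 = (\<chi> i j. if j = 1 then f1$i else if j = 2 then f2$i else f3$i)"

lemma cols_mult: "cols f1 f2 f3 *v v = v$1 *s f1 + v$2 *s f2 + v$3 *s f3"
  by (simp add: vec3_eq_iff cols_def matrix_vector_mult_def sum_3 algebra_simps)

lemma hp_cols:
  assumes "herm f1 f1 = 0" "herm f2 f2 = 1" "herm f3 f3 = 0" "herm f1 f2 = 0" "herm f1 f3 = 1" "herm f2 f3 = 0"
  shows "hp (cols f1 f2 f3)"
proof -
  have s: "herm f2 f1 = 0" "herm f3 f1 = 1" "herm f3 f2 = 0" using assms herm_sym by (metis complex_cnj_zero complex_cnj_one)+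
  show ?thesis unfolding hp_def cols_mult
    by (simp add: herm_add_left herm_add_right herm_scale_left herm_scale_right assms s) (simp add: herm_def)
qed


lemma mv_scale: "(A::complex^3^3) *v (c *s x) = c *s (A *v x)"
  by (simp add: vec_eq_iff matrix_vector_mult_def sum_distrib_left mult.left_commute)

lemma lift_none: "lift None = vec3 1 0 0" by (simp add: lift_def)
lemma lift_some: "lift (Some (z,t)) = vec3 (- complex_of_real ((cmod z)\<^sup>2) + \<i> * complex_of_real t)
                          (complex_of_real (sqrt 2) * z) 1" by (simp add: lift_def)

lemma lift_nz: "lift p \<noteq> 0"
  by (cases p) (auto simp: lift_def vec3_eq_iff)

lemma cmod_sq: "complex_of_real ((cmod z)\<^sup>2) = z * cnj z"
  by (fact complex_norm_square)

lemma sqrt2c: "complex_of_real (sqrt 2) * complex_of_real (sqrt 2) = 2"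
  by (simp flip: of_real_mult)

lemma Im_lift1: "Im (- complex_of_real a + \<i> * complex_of_real t) = t" by simp

lemma aux: "cnj w = w \<Longrightarrow> (- w + \<i> * complex_of_real t) + w * 2 + cnj (- w + \<i> * complex_of_real t) = 0"
  by (simp add: algebra_simps)

lemma lift_null: "herm (lift p) (lift p) = 0"
proof (cases p)
  case None then show ?thesis by (simp add: lift_def herm_def)
next
  case (Some a) then obtain z t where "p = Some (z,t)" by (cases a) auto
  then show ?thesis
  proof -
    have m: "(complex_of_real (sqrt 2) * z) * cnj (complex_of_real (sqrt 2) * z) = complex_of_real ((cmod z)^2) * 2"
    proof -
      have "(complex_of_real (sqrt 2) * z) * cnj (complex_of_real (sqrt 2) * z) = (complex_of_real (sqrt 2) * complex_of_real (sqrt 2)) * (z * cnj z)"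
        by (simp only: complex_cnj_mult complex_cnj_complex_of_real mult_ac)
      then show ?thesis by (simp only: sqrt2c cmod_sq mult.commute)
    qed
    have "herm (lift p) (lift p) = (- complex_of_real ((cmod z)^2) + \<i> * complex_of_real t) + complex_of_real ((cmod z)^2) * 2 + cnj (- complex_of_real ((cmod z)^2) + \<i> * complex_of_real t)"
      by (simp only: \<open>p = Some (z,t)\<close> lift_some herm_def vec3_nth complex_cnj_one mult_1_right mult_1_left m)
    also have "\<dots> = 0" by (rule aux) simp
    finally show ?thesis .
  qed
qed

lemma lift_scal_eq: assumes "lift p = c *s lift q" shows "p = q"
proof (cases p; cases q)
  fix a b assume p: "p = Some a" and q: "q = Some b"
  obtain z t where a: "a = (z,t)" by (cases a)
  obtain z' t' where b: "b = (z',t')" by (cases b)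
  from assms have "c = 1" by (simp add: p q a b lift_some vec3_eq_iff)
  with assms have eq: "lift (Some (z,t)) = lift (Some (z',t'))" by (simp add: p q a b)
  have "Im (lift (Some (z,t)) $ 1) = Im (lift (Some (z',t')) $ 1)" by (simp only: eq)
  then have "t = t'" by (simp only: lift_some vec3_nth Im_lift1)
  have "lift (Some (z,t)) $ 2 = lift (Some (z',t')) $ 2" by (simp only: eq)
  then have "z = z'" by (simp add: lift_some)
  moreover note \<open>t = t'\<close>
  ultimately show ?thesis by (simp add: p q a b)
qed (use assms in \<open>auto simp: lift_def vec3_eq_iff split: prod.splits\<close>)

lemma null_vec: assumes "herm v v = 0" "v \<noteq> 0" shows "\<exists>q c. c \<noteq> 0 \<and> v = c *s lift q"
proof (cases "v$3 = 0")
  case True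
  have "herm v v = v$2 * cnj (v$2)" using True by (simp add: herm_def)
  then have "v$2 * cnj (v$2) = 0" using assms(1) by simp
  then have "v$2 = 0" by simp
  then have "v = v$1 *s lift None" "v$1 \<noteq> 0" using True assms(2) by (auto simp: lift_none vec3_eq_iff)
  then show ?thesis by blast
next
  case False
  define c where "c = v$3"
  define a where "a = v$1 / c"
  define b where "b = v$2 / c"
  define z where "z = b / complex_of_real (sqrt 2)"
  have hv: "herm v v = c * cnj c * (a + b * cnj b + cnj a)" using False
    by (simp add: herm_def a_def b_def c_def field_simps)
  then have h0: "a + b * cnj b + cnj a = 0" using assms(1) False by (simp add: c_def)
  have "Re a = - ((cmod z)\<^sup>2)"
  proof -
    have "Re (a + b * cnj b + cnj a) = 0" using h0 by simp
    then have "2 * Re a + (cmod b)\<^sup>2 = 0" by (simp add: complex_mult_cnj cmod_power2)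
    moreover have "(cmod b)\<^sup>2 = 2 * (cmod z)\<^sup>2" by (simp add: z_def norm_divide power_divide)
    ultimately show ?thesis by linarith
  qed
  then have a_eq: "a = - complex_of_real ((cmod z)\<^sup>2) + \<i> * complex_of_real (Im a)"
    by (intro complex_eqI) simp_all
  have b_eq: "b = complex_of_real (sqrt 2) * z" by (simp add: z_def)
  have l: "lift (Some (z, Im a)) = vec3 a b 1"
    by (simp only: lift_some a_eq[symmetric] b_eq[symmetric])
  have "v$1 = c * a" "v$2 = c * b" using False by (simp_all add: a_def b_def c_def)
  then have "v = c *s lift (Some (z, Im a))"
    by (simp add: l vec3_eq_iff c_def)
  moreover have "c \<noteq> 0" using False by (simp add: c_def)
  ultimately show ?thesis by blast
qed

lemma acts_fun: assumes "acts A p q" "acts A p q'" shows "q = q'"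
proof -
  obtain c where c: "c \<noteq> 0" "A *v lift p = c *s lift q" using assms(1) acts_def by blast
  obtain d where d: "d \<noteq> 0" "A *v lift p = d *s lift q'" using assms(2) acts_def by blast
  have "lift q = (d / c) *s lift q'" using c d by (simp add: vec3_eq_iff field_simps)
  then show ?thesis by (rule lift_scal_eq)
qed

lemma acts_inj: assumes "hp A" "acts A p q" "acts A p' q" shows "p = p'"
proof -
  obtain c where c: "c \<noteq> 0" "A *v lift p = c *s lift q" using assms(2) acts_def by blast
  obtain d where d: "d \<noteq> 0" "A *v lift p' = d *s lift q" using assms(3) acts_def by blast
  have "A *v (lift p - (c / d) *s lift p') = 0"
    using c d by (simp add: matrix_vector_mult_diff_distrib mv_scale vec3_eq_iff field_simps)
  then have "lift p - (c / d) *s lift p' = 0" by (rule hp_inj[OF assms(1)])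
  then have "lift p = (c / d) *s lift p'" by simp
  then show ?thesis by (rule lift_scal_eq)
qed

lemma acts_comp: assumes "acts A p q" "acts B q r" shows "acts (B ** A) p r"
proof -
  obtain c where c: "c \<noteq> 0" "A *v lift p = c *s lift q" using assms(1) acts_def by blast
  obtain d where d: "d \<noteq> 0" "B *v lift q = d *s lift r" using assms(2) acts_def by blast
  have "(B ** A) *v lift p = (c * d) *s lift r"
    by (simp add: c d mv_scale flip: matrix_vector_mul_assoc)
  then show ?thesis using c d unfolding acts_def by (intro exI[of _ "c*d"]) simp
qed

lemma acts_inv: assumes "acts A p q" "B ** A = mat 1" shows "acts B q p"
proof -
  obtain c where c: "c \<noteq> 0" "A *v lift p = c *s lift q" using assms(1) acts_def by blast
  have "lift p = B *v (c *s lift q)" using c(2) assms(2)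
    by (metis matrix_vector_mul_assoc matrix_vector_mul_lid)
  then have "B *v lift q = (1/c) *s lift p" using c(1) by (simp add: mv_scale vec3_eq_iff)
  then show ?thesis using c(1) unfolding acts_def by (intro exI[of _ "1/c"]) simp
qed

lemma acts_ex: assumes "hp A" shows "\<exists>q. acts A p q"
proof -
  have "herm (A *v lift p) (A *v lift p) = 0" using assms lift_null by (simp add: hp_def)
  moreover have "A *v lift p \<noteq> 0" using hp_inj[OF assms] lift_nz by blast
  ultimately obtain q c where "c \<noteq> 0" "A *v lift p = c *s lift q" using null_vec by blast
  then show ?thesis unfolding acts_def by blast
qed

lemma acts_one: "acts (mat 1) p p" unfolding acts_def by (rule exI[of _ 1]) (simp add: vec3_eq_iff)


abbreviation "e1 \<equiv> vec3 1 0 0"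
abbreviation "e2 \<equiv> vec3 0 1 0"
abbreviation "e3 \<equiv> vec3 0 0 1"

lemma lift_zero: "lift (Some (0,0)) = e3" by (simp add: lift_some)

lemma herm_vec3: "herm (vec3 a b c) (vec3 a' b' c') = a * cnj c' + b * cnj b' + c * cnj a'"
  by (simp add: herm_def)

lemma cols_e: "cols f1 f2 f3 *v e1 = f1" "cols f1 f2 f3 *v e2 = f2" "cols f1 f2 f3 *v e3 = f3"
  by (simp_all add: cols_mult vec3_eq_iff)

lemma acts_I: "\<exists>I. hp I \<and> acts I None (Some (0,0)) \<and> acts I (Some (0,0)) None"
proof (intro exI conjI)
  show "hp (cols e3 e2 e1)" by (rule hp_cols) (simp_all add: herm_vec3)
  show "acts (cols e3 e2 e1) None (Some (0,0))" unfolding acts_def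
    by (rule exI[of _ 1]) (simp add: lift_none lift_zero cols_e)
  show "acts (cols e3 e2 e1) (Some (0,0)) None" unfolding acts_def
    by (rule exI[of _ 1]) (simp add: lift_none lift_zero cols_e)
qed

lemma acts_T: "\<exists>B. hp B \<and> acts B None None \<and> acts B (Some (z,s)) (Some (0,0))"
proof -
  define T where "T = cols e1 (vec3 (- complex_of_real (sqrt 2) * cnj z) 1 0) (lift (Some (z,s)))"
  have "hp T" unfolding T_def
  proof (rule hp_cols)
    show "herm (lift (Some (z, s))) (lift (Some (z, s))) = 0" by (rule lift_null)
    show "herm (vec3 (- complex_of_real (sqrt 2) * cnj z) 1 0) (lift (Some (z, s))) = 0"
      by (simp add: lift_some herm_vec3)
  qed (simp_all add: herm_vec3 lift_some)
  have a1: "acts T None None" unfolding acts_def T_def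
    by (rule exI[of _ 1]) (simp add: lift_none cols_e)
  have a2: "acts T (Some (0,0)) (Some (z,s))" unfolding acts_def T_def
    by (rule exI[of _ 1]) (simp add: lift_zero cols_e)
  obtain B where B: "B ** T = mat 1" "T ** B = mat 1" using hp_inv[OF \<open>hp T\<close>] by blast
  have "hp B" by (rule hp_inverse[OF \<open>hp T\<close> B(2)])
  moreover have "acts B None None" by (rule acts_inv[OF a1 B(1)])
  moreover have "acts B (Some (z,s)) (Some (0,0))" by (rule acts_inv[OF a2 B(1)])
  ultimately show ?thesis by blast
qed

lemma acts_to_inf: "\<exists>A. hp A \<and> acts A p None"
proof (cases p)
  case None then show ?thesis using hp_one acts_one by blast
next
  case (Some a)
  obtain z s where p: "p = Some (z,s)" using Some by (cases a) auto
  obtain B where B: "hp B" "acts B p (Some (0,0))" using acts_T p by blast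
  obtain I where I: "hp I" "acts I (Some (0,0)) None" using acts_I by blast
  have "hp (I ** B)" using B I hp_mult by blast
  moreover have "acts (I ** B) p None" using acts_comp B I by blast
  ultimately show ?thesis by blast
qed

definition Dm :: "complex \<Rightarrow> complex^3^3" where
  "Dm k = cols (vec3 (cnj k) 0 0) e2 (vec3 0 0 (1/k))"

lemma hp_Dm: "k \<noteq> 0 \<Longrightarrow> hp (Dm k)"
  unfolding Dm_def by (rule hp_cols) (simp_all add: herm_vec3)

lemma acts_Dm: assumes "k \<noteq> 0" shows "acts (Dm k) (Some (w,u)) (Some (k*w, (cmod k)\<^sup>2 * u))"
proof -
  have e: "Dm k *v lift (Some (w,u)) = (1/k) *s lift (Some (k*w, (cmod k)\<^sup>2 * u))"
  proof -
    have "complex_of_real ((cmod (k*w))\<^sup>2) = (k * cnj k) * complex_of_real ((cmod w)\<^sup>2)"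
      by (simp only: cmod_sq complex_cnj_mult mult_ac)
    moreover have "complex_of_real ((cmod k)\<^sup>2 * u) = (k * cnj k) * complex_of_real u"
      by (simp only: of_real_mult cmod_sq)
    moreover have kk: "(complex_of_real (cmod k))\<^sup>2 = k * cnj k" using cmod_sq[of k] by simp
    ultimately show ?thesis using assms
      by (simp add: kk Dm_def cols_mult lift_some vec3_eq_iff field_simps)
  qed
  show ?thesis unfolding acts_def using assms e by (intro exI[of _ "1/k"]) simp
qed

lemma Dm_none: "k \<noteq> 0 \<Longrightarrow> acts (Dm k) None None"
  unfolding acts_def by (rule exI[of _ "cnj k"]) (simp add: Dm_def cols_e lift_none vec3_eq_iff)

lemma Dm_zero: "k \<noteq> 0 \<Longrightarrow> acts (Dm k) (Some (0,0)) (Some (0,0))"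
  using acts_Dm[of k 0 0] by simp

lemma mv_lin: "(A::complex^3^3) *v v = v$1 *s (A *v e1) + v$2 *s (A *v e2) + v$3 *s (A *v e3)"
  by (simp add: vec3_eq_iff matrix_vector_mult_def sum_3 mult.commute)

lemma stab:
  assumes "hp A" "acts A None None" "acts A (Some (0,0)) (Some (0,0))"
  shows "\<exists>k. k \<noteq> 0 \<and> (\<forall>z t. acts A (Some (z,t)) (Some (k*z, (cmod k)\<^sup>2 * t)))"
proof -
  obtain c where c: "c \<noteq> 0" "A *v e1 = c *s e1" using assms(2) by (auto simp: acts_def lift_none)
  obtain d where d: "d \<noteq> 0" "A *v e3 = d *s e3" using assms(3) by (auto simp: acts_def lift_zero)
  define g where "g = A *v e2"
  have h: "\<And>v w. herm (A *v v) (A *v w) = herm v w" using assms(1) by (simp add: hp_def)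
  have "herm g (c *s e1) = 0" using h[of e2 e1] c g_def by (simp add: herm_vec3)
  then have g3: "g$3 = 0" using c(1) by (simp add: herm_def)
  have "herm g (d *s e3) = 0" using h[of e2 e3] d g_def by (simp add: herm_vec3)
  then have g1: "g$1 = 0" using d(1) by (simp add: herm_def)
  have "herm (c *s e1) (d *s e3) = 1" using h[of e1 e3] c d by (simp add: herm_vec3)
  then have cd: "c * cnj d = 1" by (simp add: herm_def)
  have "herm g g = 1" using h[of e2 e2] g_def by (simp add: herm_vec3)
  then have gg: "g$2 * cnj (g$2) = 1" using g1 g3 by (simp add: herm_def)
  define k where "k = g$2 / d"
  have cnjd: "cnj d \<noteq> 0" using d(1) by simp
  have C: "c = 1 / cnj d" using cd cnjd by (simp add: field_simps)
  have K: "k * cnj k = 1 / (d * cnj d)" using gg d(1) by (simp add: k_def field_simps)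
  have kk: "(complex_of_real (cmod k))\<^sup>2 = k * cnj k" using cmod_sq[of k] by simp
  have knz: "k \<noteq> 0" using gg d(1) by (auto simp: k_def)
  have "acts A (Some (z,t)) (Some (k*z, (cmod k)\<^sup>2 * t))" for z t
  proof -
    have "A *v lift (Some (z,t)) = d *s lift (Some (k*z, (cmod k)\<^sup>2 * t))"
    proof -
      have m1: "complex_of_real ((cmod (k*z))\<^sup>2) = (k * cnj k) * complex_of_real ((cmod z)\<^sup>2)"
        by (simp only: cmod_sq complex_cnj_mult mult_ac)
      have m2: "complex_of_real ((cmod k)\<^sup>2 * t) = (k * cnj k) * complex_of_real t"
        by (simp only: of_real_mult cmod_sq)
      have "A *v lift (Some (z,t)) = vec3 (c * (- complex_of_real ((cmod z)\<^sup>2) + \<i> * complex_of_real t)) (g$2 * (complex_of_real (sqrt 2) * z)) d"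
        by (subst mv_lin) (simp add: c d g1 g3 lift_some vec3_eq_iff flip: g_def)
      also have "\<dots> = d *s lift (Some (k*z, (cmod k)\<^sup>2 * t))"
        unfolding lift_some m1 m2 K using d(1) cnjd by (simp add: vec3_eq_iff C k_def field_simps)
      finally show ?thesis .
    qed
    then show ?thesis using d(1) unfolding acts_def by blast
  qed
  then show ?thesis using knz by blast
qed

lemma lin2:
  fixes a b c d u1 u2 u3 w1 w2 w3 :: complex
  assumes "1 = a*u1 + b*w1" "0 = a*u2+b*w2" "0 = a*u3+b*w3" "0 = c*u1+d*w1" "0 = c*u2+d*w2" "1 = c*u3+d*w3"
  shows "u2 = 0 \<and> w2 = 0"
proof -
  define D where "D = a*d - b*c"
  have "D*u2 = d*(a*u2 + b*w2) - b*(c*u2 + d*w2)" by (simp add: D_def algebra_simps)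
  then have 1: "D*u2 = 0" using assms by simp
  have "D*w2 = a*(c*u2 + d*w2) - c*(a*u2 + b*w2)" by (simp add: D_def algebra_simps)
  then have 2: "D*w2 = 0" using assms by simp
  show ?thesis
  proof (cases "D = 0")
    case False then show ?thesis using 1 2 by simp
  next
    case True
    have "D*u1 = d*(a*u1 + b*w1) - b*(c*u1 + d*w1)" by (simp add: D_def algebra_simps)
    then have "d = 0" using assms True by simp
    have "D*w3 = a*(c*u3 + d*w3) - c*(a*u3 + b*w3)" by (simp add: D_def algebra_simps)
    then have "a = 0" using assms True by simp
    have "b = 0 \<or> c = 0" using True \<open>a = 0\<close> by (simp add: D_def)
    then show ?thesis using assms \<open>a = 0\<close> \<open>d = 0\<close> by auto
  qed
qed

lemma circ_hard:
  assumes "C \<in> C_circles" "None \<in> C" "Some (0,0) \<in> C" "Some (z,t) \<in> C"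
  shows "z = 0"
proof -
  obtain u w where C: "C = {p. \<exists>a b. lift p = a *s u + b *s w}" using assms(1) unfolding C_circles_def by blast
  obtain a b where 1: "e1 = a *s u + b *s w" using assms(2) C by (auto simp: lift_none)
  obtain c d where 3: "e3 = c *s u + d *s w" using assms(3) C by (auto simp: lift_zero)
  obtain a' b' where 4: "lift (Some (z,t)) = a' *s u + b' *s w" using assms(4) C by auto
  have "u$2 = 0 \<and> w$2 = 0"
  proof (rule lin2)
    show "1 = a * u$1 + b * w$1" "0 = a * u$2 + b * w$2" "0 = a * u$3 + b * w$3"
      using 1 by (simp_all add: vec3_eq_iff)
    show "0 = c * u$1 + d * w$1" "0 = c * u$2 + d * w$2" "1 = c * u$3 + d * w$3"
      using 3 by (simp_all add: vec3_eq_iff)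
  qed
  then have "lift (Some (z,t)) $ 2 = 0" using 4 by simp
  then show ?thesis by (simp add: lift_some)
qed

lemma circ_easy: "\<exists>C\<in>C_circles. None \<in> C \<and> Some (0,0) \<in> C \<and> Some (0,t) \<in> C"
proof -
  define r where "r = complex_of_real (sqrt 2 / 2)"
  have rr: "r * r = 1/2" unfolding r_def by (simp flip: of_real_mult)
  have cr: "cnj r = r" by (simp add: r_def)
  have rnz: "r \<noteq> 0" using rr by auto
  define u where "u = vec3 r 0 r"
  define w where "w = vec3 r 0 (-r)"
  define C where "C = {p. \<exists>a b. lift p = a *s u + b *s w}"
  have CC: "C \<in> C_circles" unfolding C_circles_def C_def
    by (rule CollectI, rule exI[of _ u], rule exI[of _ w]) (simp add: u_def w_def herm_vec3 cr rr)
  have mem: "p \<in> C" if "lift p $ 2 = 0" for p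
  proof -
    let ?x = "lift p"
    have "?x = ((?x$1 + ?x$3)/(2*r)) *s u + ((?x$1 - ?x$3)/(2*r)) *s w"
      using that rnz by (simp add: vec3_eq_iff u_def w_def field_simps)
    then show ?thesis unfolding C_def by blast
  qed
  have "None \<in> C" "Some (0,0) \<in> C" "Some (0,t) \<in> C" by (rule mem; simp add: lift_none lift_some)+
  then show ?thesis using CC by blast
qed

lemma circ_inv:
  assumes "hp B" "acts B p p'" "acts B q q'" "acts B r r'" "on_C_circle p q r"
  shows "on_C_circle p' q' r'"
proof -
  obtain C where C: "C \<in> C_circles" "p \<in> C" "q \<in> C" "r \<in> C" using assms(5) on_C_circle_def by blast
  obtain u w where Cd: "C = {p. \<exists>a b. lift p = a *s u + b *s w}" "herm u u = 1" "herm w w = -1" "herm u w = 0"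
    using C(1) unfolding C_circles_def by blast
  define C' where "C' = {p. \<exists>a b. lift p = a *s (B *v u) + b *s (B *v w)}"
  have h: "\<And>v w. herm (B *v v) (B *v w) = herm v w" using assms(1) by (simp add: hp_def)
  have "C' \<in> C_circles" unfolding C_circles_def C'_def
    by (rule CollectI, rule exI[of _ "B *v u"], rule exI[of _ "B *v w"]) (simp add: h Cd)
  moreover have "s' \<in> C'" if sC: "s \<in> C" and sa: "acts B s s'" for s s'
  proof -
    obtain a b where ab: "lift s = a *s u + b *s w" using sC Cd by blast
    obtain e where e: "e \<noteq> 0" "B *v lift s = e *s lift s'" using sa acts_def by blast
    have "e *s lift s' = a *s (B *v u) + b *s (B *v w)"
      using e(2) ab by (simp add: matrix_vector_right_distrib mv_scale)
    then have "lift s' = (a/e) *s (B *v u) + (b/e) *s (B *v w)"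
      using e(1) by (simp add: vec3_eq_iff field_simps)
    then show ?thesis unfolding C'_def by blast
  qed
  ultimately have "C' \<in> C_circles" "p' \<in> C'" "q' \<in> C'" "r' \<in> C'" using C assms(2-4) by auto
  then show ?thesis unfolding on_C_circle_def by blast
qed



lemma pu_equiv_iff: "pu_equiv (p1,p2,p3,p4) (q1,q2,q3,q4) \<longleftrightarrow>
   (\<exists>A. hp A \<and> acts A p1 q1 \<and> acts A p2 q2 \<and> acts A p3 q3 \<and> acts A p4 q4)"
  by (auto simp: pu_equiv_def U21_iff)

lemma pu_refl: "pu_equiv p p"
  by (cases p) (auto simp: pu_equiv_iff intro!: exI[of _ "mat 1"] hp_one acts_one)

lemma pu_sym: assumes "pu_equiv p q" shows "pu_equiv q p"
proof -
  obtain p1 p2 p3 p4 q1 q2 q3 q4 where pq: "p = (p1,p2,p3,p4)" "q = (q1,q2,q3,q4)" by (cases p, cases q) auto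
  obtain A where A: "hp A" "acts A p1 q1" "acts A p2 q2" "acts A p3 q3" "acts A p4 q4"
    using assms pq pu_equiv_iff by blast
  obtain B where B: "B ** A = mat 1" "A ** B = mat 1" using hp_inv[OF A(1)] by blast
  have "hp B" by (rule hp_inverse[OF A(1) B(2)])
  moreover have "acts B q1 p1" "acts B q2 p2" "acts B q3 p3" "acts B q4 p4"
    using A(2-5) acts_inv B(1) by blast+
  ultimately show ?thesis using pq pu_equiv_iff by blast
qed

lemma pu_trans: assumes "pu_equiv p q" "pu_equiv q r" shows "pu_equiv p r"
proof -
  obtain p1 p2 p3 p4 q1 q2 q3 q4 r1 r2 r3 r4 where pq: "p = (p1,p2,p3,p4)" "q = (q1,q2,q3,q4)" "r = (r1,r2,r3,r4)"
    by (cases p, cases q, cases r) auto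
  obtain A where A: "hp A" "acts A p1 q1" "acts A p2 q2" "acts A p3 q3" "acts A p4 q4"
    using assms(1) pq pu_equiv_iff by blast
  obtain B where B: "hp B" "acts B q1 r1" "acts B q2 r2" "acts B q3 r3" "acts B q4 r4"
    using assms(2) pq pu_equiv_iff by blast
  have "hp (B ** A)" using A B hp_mult by blast
  moreover have "acts (B ** A) p1 r1" "acts (B ** A) p2 r2" "acts (B ** A) p3 r3" "acts (B ** A) p4 r4"
    using A B acts_comp by blast+
  ultimately show ?thesis using pq pu_equiv_iff by blast
qed

lemma C4_inv:
  assumes x: "(p1,p2,p3,p4) \<in> C4''" and A: "hp A" "acts A p1 q1" "acts A p2 q2" "acts A p3 q3" "acts A p4 q4"
  shows "(q1,q2,q3,q4) \<in> C4''"
proof -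
  obtain B where B: "B ** A = mat 1" "A ** B = mat 1" using hp_inv[OF A(1)] by blast
  have hB: "hp B" by (rule hp_inverse[OF A(1) B(2)])
  have Bq: "acts B q1 p1" "acts B q2 p2" "acts B q3 p3" "acts B q4 p4"
    using A(2-5) acts_inv B(1) by blast+
  have xd: "p1 \<noteq> p2" "p1 \<noteq> p3" "p1 \<noteq> p4" "p2 \<noteq> p3" "p2 \<noteq> p4" "p3 \<noteq> p4"
    "\<not> on_C_circle p1 p2 p3" "\<not> on_C_circle p2 p3 p4"
    "\<not> (\<exists>A\<in>U21. acts A p2 p2 \<and> acts A p3 p3 \<and> acts A p1 p4)"
    using x unfolding C4''_def by auto
  have d: "q1 \<noteq> q2" "q1 \<noteq> q3" "q1 \<noteq> q4" "q2 \<noteq> q3" "q2 \<noteq> q4" "q3 \<noteq> q4"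
    using xd(1-6) acts_inj[OF A(1)] A(2-5) by metis+
  have c1: "\<not> on_C_circle q1 q2 q3" using circ_inv[OF hB Bq(1-3)] xd(7) by blast
  have c2: "\<not> on_C_circle q2 q3 q4" using circ_inv[OF hB Bq(2-4)] xd(8) by blast
  have c3: "\<not> (\<exists>D\<in>U21. acts D q2 q2 \<and> acts D q3 q3 \<and> acts D q1 q4)"
  proof
    assume "\<exists>D\<in>U21. acts D q2 q2 \<and> acts D q3 q3 \<and> acts D q1 q4"
    then obtain D where D: "hp D" "acts D q2 q2" "acts D q3 q3" "acts D q1 q4" by (auto simp: U21_iff)
    have "hp (B ** (D ** A))" using hB D(1) A(1) hp_mult by blast
    moreover have "acts (B ** (D ** A)) p2 p2" "acts (B ** (D ** A)) p3 p3" "acts (B ** (D ** A)) p1 p4"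
      using acts_comp A(2-5) D(2-4) Bq by blast+
    ultimately show False using xd(9) by (auto simp: U21_iff)
  qed
  show ?thesis unfolding C4''_def using d c1 c2 c3 by auto
qed

lemma NF_C4: assumes "z \<noteq> 0" "t \<noteq> (cmod z)\<^sup>2 * tan a" shows "NF a z t \<in> C4''"
proof -
  have d: "Some (1, tan a) \<noteq> Some (z,t)" using assms by auto
  have c1: "\<not> on_C_circle (Some (1, tan a)) None (Some (0,0))"
  proof
    assume "on_C_circle (Some (1, tan a)) None (Some (0,0))"
    then obtain C where "C \<in> C_circles" "None \<in> C" "Some (0,0) \<in> C" "Some (1, tan a) \<in> C"
      unfolding on_C_circle_def by blast
    then have "(1::complex) = 0" by (rule circ_hard)
    then show False by simp
  qed
  have c2: "\<not> on_C_circle None (Some (0,0)) (Some (z,t))"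
  proof
    assume "on_C_circle None (Some (0,0)) (Some (z,t))"
    then obtain C where "C \<in> C_circles" "None \<in> C" "Some (0,0) \<in> C" "Some (z,t) \<in> C"
      unfolding on_C_circle_def by blast
    then have "z = 0" by (rule circ_hard)
    then show False using assms by simp
  qed
  have c3: "\<not> (\<exists>A\<in>U21. acts A None None \<and> acts A (Some (0,0)) (Some (0,0)) \<and> acts A (Some (1, tan a)) (Some (z,t)))"
  proof
    assume "\<exists>A\<in>U21. acts A None None \<and> acts A (Some (0,0)) (Some (0,0)) \<and> acts A (Some (1, tan a)) (Some (z,t))"
    then obtain A where A: "hp A" "acts A None None" "acts A (Some (0,0)) (Some (0,0))" "acts A (Some (1, tan a)) (Some (z,t))"
      by (auto simp: U21_iff)
    obtain k where k: "\<forall>z t. acts A (Some (z,t)) (Some (k*z, (cmod k)\<^sup>2 * t))" using stab[OF A(1-3)] by blast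
    have "Some (k*1, (cmod k)\<^sup>2 * tan a) = Some (z,t)" using acts_fun k A(4) by blast
    then show False using assms by auto
  qed
  show ?thesis unfolding C4''_def NF_def using d c1 c2 c3 assms(1) by auto
qed

lemma C4_NF: assumes "NF a z t \<in> C4''" shows "z \<noteq> 0 \<and> t \<noteq> (cmod z)\<^sup>2 * tan a"
proof
  have x: "\<not> on_C_circle None (Some (0,0)) (Some (z,t))"
    "\<not> (\<exists>A\<in>U21. acts A None None \<and> acts A (Some (0,0)) (Some (0,0)) \<and> acts A (Some (1, tan a)) (Some (z,t)))"
    using assms unfolding C4''_def NF_def by auto
  show "z \<noteq> 0"
  proof
    assume "z = 0"
    obtain C where "C\<in>C_circles" "None \<in> C" "Some (0,0) \<in> C" "Some (0,t) \<in> C" using circ_easy by blast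
    then have "on_C_circle None (Some (0,0)) (Some (z,t))" unfolding on_C_circle_def using \<open>z = 0\<close> by blast
    then show False using x(1) by blast
  qed
  show "t \<noteq> (cmod z)\<^sup>2 * tan a"
  proof
    assume t: "t = (cmod z)\<^sup>2 * tan a"
    have "acts (Dm z) (Some (1, tan a)) (Some (z,t))" using acts_Dm[OF \<open>z \<noteq> 0\<close>, of 1 "tan a"] t by simp
    moreover have "Dm z \<in> U21" using hp_Dm \<open>z \<noteq> 0\<close> U21_iff by blast
    ultimately show False using x(2) Dm_none Dm_zero \<open>z \<noteq> 0\<close> by blast
  qed
qed


lemma norm_ex:
  assumes x: "(p1,p2,p3,p4) \<in> C4''"
  shows "\<exists>A a z t. hp A \<and> a \<in> {-pi/2<..<pi/2} \<and> acts A p1 (Some (1, tan a)) \<and> acts A p2 None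
            \<and> acts A p3 (Some (0,0)) \<and> acts A p4 (Some (z,t))"
proof -
  have xd: "p2 \<noteq> p3" using x unfolding C4''_def by auto
  obtain A1 where A1: "hp A1" "acts A1 p2 None" using acts_to_inf by blast
  obtain q3 where q3: "acts A1 p3 q3" using acts_ex[OF A1(1)] by blast
  have "q3 \<noteq> None"
  proof
    assume "q3 = None"
    then show False using acts_inj[OF A1(1), of p3 None p2] A1(2) q3 xd by simp
  qed
  then obtain zz ss where q3s: "q3 = Some (zz,ss)" by auto
  obtain B where B: "hp B" "acts B None None" "acts B q3 (Some (0,0))" using acts_T q3s by blast
  define A2 where "A2 = B ** A1"
  have hA2: "hp A2" using A1 B hp_mult A2_def by blast
  have A2a: "acts A2 p2 None" "acts A2 p3 (Some (0,0))" using acts_comp A1 B q3 A2_def by blast+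
  obtain q1 where q1: "acts A2 p1 q1" using acts_ex[OF hA2] by blast
  obtain q4 where q4: "acts A2 p4 q4" using acts_ex[OF hA2] by blast
  have Q: "(q1, None, Some (0,0), q4) \<in> C4''" by (rule C4_inv[OF x hA2 q1 A2a q4])
  then have "q1 \<noteq> None" unfolding C4''_def by auto
  then obtain w u where q1s: "q1 = Some (w,u)" by auto
  have "w \<noteq> 0"
  proof
    assume "w = 0"
    obtain C where "C\<in>C_circles" "None \<in> C" "Some (0,0) \<in> C" "Some (0,u) \<in> C" using circ_easy by blast
    then have "on_C_circle q1 None (Some (0,0))" unfolding on_C_circle_def using \<open>w = 0\<close> q1s by blast
    then show False using Q unfolding C4''_def by auto
  qed
  define k where "k = 1 / w"
  have knz: "k \<noteq> 0" using \<open>w \<noteq> 0\<close> by (simp add: k_def)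
  define A where "A = Dm k ** A2"
  have hA: "hp A" using hp_Dm[OF knz] hA2 hp_mult A_def by blast
  define s where "s = (cmod k)\<^sup>2 * u"
  have "acts (Dm k) q1 (Some (1, s))" using acts_Dm[OF knz, of w u] q1s \<open>w \<noteq> 0\<close> by (simp add: k_def s_def)
  then have a1: "acts A p1 (Some (1, s))" using acts_comp q1 A_def by blast
  have a2: "acts A p2 None" "acts A p3 (Some (0,0))"
    using acts_comp A2a Dm_none[OF knz] Dm_zero[OF knz] A_def by blast+
  obtain q4' where a4: "acts A p4 q4'" using acts_ex[OF hA] by blast
  have "(Some (1, s), None, Some (0,0), q4') \<in> C4''" by (rule C4_inv[OF x hA a1 a2 a4])
  then have "None \<noteq> q4'" unfolding C4''_def by blast
  then obtain z t where q4s: "q4' = Some (z,t)" by (cases q4') auto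
  define a where "a = arctan s"
  have "tan a = s" by (simp add: a_def tan_arctan)
  moreover have "a \<in> {-pi/2<..<pi/2}" using arctan_lbound[of s] arctan_ubound[of s] by (simp add: a_def)
  ultimately show ?thesis using hA a1 a2 a4 q4s by metis
qed

lemma NF_unique:
  assumes "pu_equiv (NF a z t) (NF a' z' t')" "a \<in> {-pi/2<..<pi/2}" "a' \<in> {-pi/2<..<pi/2}"
  shows "a = a' \<and> z = z' \<and> t = t'"
proof -
  obtain A where A: "hp A" "acts A (Some (1, tan a)) (Some (1, tan a'))" "acts A None None"
     "acts A (Some (0,0)) (Some (0,0))" "acts A (Some (z,t)) (Some (z',t'))"
    using assms(1) unfolding NF_def pu_equiv_iff by blast
  obtain k where k: "\<forall>z t. acts A (Some (z,t)) (Some (k*z, (cmod k)\<^sup>2 * t))" using stab[OF A(1) A(3) A(4)] by blast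
  have "Some (k*1, (cmod k)\<^sup>2 * tan a) = Some (1, tan a')" using acts_fun k A(2) by blast
  then have k1: "k = 1" and "tan a = tan a'" by auto
  then have "arctan (tan a) = arctan (tan a')" by simp
  then have "a = a'" using assms(2,3) by (simp add: arctan_tan)
  moreover have "Some (k*z, (cmod k)\<^sup>2 * t) = Some (z',t')" using acts_fun k A(5) by blast
  ultimately show ?thesis using k1 by simp
qed

lemma cartan_inv:
  assumes "hp A" "acts A p1 q1" "acts A p2 q2" "acts A p3 q3"
  shows "cartan p1 p2 p3 = cartan q1 q2 q3"
proof -
  obtain c1 where c1: "c1 \<noteq> 0" "A *v lift p1 = c1 *s lift q1" using assms(2) acts_def by blast
  obtain c2 where c2: "c2 \<noteq> 0" "A *v lift p2 = c2 *s lift q2" using assms(3) acts_def by blast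
  obtain c3 where c3: "c3 \<noteq> 0" "A *v lift p3 = c3 *s lift q3" using assms(4) acts_def by blast
  have h: "\<And>v w. herm (A *v v) (A *v w) = herm v w" using assms(1) by (simp add: hp_def)
  have H: "herm (lift pi) (lift pj) = ci * cnj cj * herm (lift qi) (lift qj)"
    if "A *v lift pi = ci *s lift qi" "A *v lift pj = cj *s lift qj" for pi pj qi qj ci cj
    using h[of "lift pi" "lift pj"] that by (simp add: herm_scale_left herm_scale_right ac_simps)
  define r where "r = (cmod c1)\<^sup>2 * (cmod c2)\<^sup>2 * (cmod c3)\<^sup>2"
  have r: "r > 0" using c1 c2 c3 by (simp add: r_def)
  have rc: "complex_of_real r = (c1 * cnj c1) * (c2 * cnj c2) * (c3 * cnj c3)"
    by (simp only: r_def of_real_mult cmod_sq)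
  have "- (herm (lift p1) (lift p2) * herm (lift p2) (lift p3) * herm (lift p3) (lift p1))
     = complex_of_real r * (- (herm (lift q1) (lift q2) * herm (lift q2) (lift q3) * herm (lift q3) (lift q1)))"
    unfolding H[OF c1(2) c2(2)] H[OF c2(2) c3(2)] H[OF c3(2) c1(2)] rc by (simp only: mult_ac minus_mult_right)
  then show ?thesis unfolding cartan_def by (simp only: Arg_times_of_real[OF r])
qed

lemma cartan_NF: assumes "a \<in> {-pi/2<..<pi/2}" shows "cartan (Some (1, tan a)) None (Some (0,0)) = a"
proof -
  have ab: "-(pi/2) < a" "a < pi/2" using assms by auto
  have cpos: "cos a > 0" using cos_gt_zero_pi[OF ab] .
  have "- (herm (lift (Some (1, tan a))) (lift None) * herm (lift None) (lift (Some (0,0))) * herm (lift (Some (0,0))) (lift (Some (1, tan a))))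
        = 1 + \<i> * complex_of_real (tan a)"
    by (simp add: lift_some lift_none herm_vec3)
  also have "\<dots> = complex_of_real (1 / cos a) * exp (\<i> * complex_of_real a)"
    using cpos by (simp add: complex_eq_iff Re_exp Im_exp tan_def)
  finally have e: "complex_of_real (1 / cos a) * exp (\<i> * complex_of_real a) = - (herm (lift (Some (1, tan a))) (lift None) * herm (lift None) (lift (Some (0,0))) * herm (lift (Some (0,0))) (lift (Some (1, tan a))))" by simp
  have "-pi < a" "a \<le> pi" using ab by auto
  then show ?thesis unfolding cartan_def using Arg_unique[OF e] cpos by simp
qed


definition RR :: "(quad \<times> quad) set" where
  "RR = {(p, q). p \<in> C4'' \<and> q \<in> C4'' \<and> pu_equiv p q}"

lemma F4_RR: "F4'' = C4'' // RR" unfolding F4''_def RR_def by simp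

lemma equiv_RR: "equiv C4'' RR"
proof (rule equivI)
  show "refl_on C4'' RR" by (rule refl_onI) (auto simp: RR_def pu_refl)
  show "sym RR" by (rule symI) (auto simp: RR_def intro: pu_sym)
  show "trans RR" by (rule transI) (auto simp: RR_def intro: pu_trans)
  show "RR \<subseteq> C4'' \<times> C4''" by (auto simp: RR_def)
qed

lemma class_sub: "X \<in> F4'' \<Longrightarrow> q \<in> X \<Longrightarrow> q \<in> C4''"
  unfolding F4_RR by (erule quotientE) (auto simp: RR_def)

lemma class_equiv: "X \<in> F4'' \<Longrightarrow> p \<in> X \<Longrightarrow> q \<in> X \<Longrightarrow> pu_equiv p q"
  unfolding F4_RR by (erule quotientE) (auto simp: RR_def intro: pu_trans pu_sym)

lemma ex_NF: assumes "X \<in> F4''" shows "\<exists>a z t. a \<in> {-pi/2<..<pi/2} \<and> NF a z t \<in> X"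
proof -
  obtain x where x: "X = RR``{x}" "x \<in> C4''" using assms unfolding F4_RR by (erule quotientE)
  obtain p1 p2 p3 p4 where xp: "x = (p1,p2,p3,p4)" by (cases x) auto
  obtain A a z t where A: "hp A" "a \<in> {-pi/2<..<pi/2}" "acts A p1 (Some (1, tan a))" "acts A p2 None"
            "acts A p3 (Some (0,0))" "acts A p4 (Some (z,t))"
    using norm_ex x(2) xp by blast
  have "NF a z t \<in> C4''" unfolding NF_def by (rule C4_inv[OF x(2)[unfolded xp] A(1) A(3-6)])
  moreover have "pu_equiv x (NF a z t)" unfolding xp NF_def pu_equiv_iff using A by blast
  ultimately have "NF a z t \<in> X" using x by (simp add: RR_def)
  then show ?thesis using A(2) by blast
qed

theorem theorem4p1:
  shows "(\<forall>X\<in>F4''.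
            (\<exists>!(a, z, t). a \<in> {-pi/2<..<pi/2} \<and> NF a z t \<in> X)
          \<and> (\<forall>a z t. a \<in> {-pi/2<..<pi/2} \<and> NF a z t \<in> X \<longrightarrow>
               z \<noteq> 0 \<and> t \<noteq> (cmod z)\<^sup>2 * tan a
               \<and> (\<forall>p1 p2 p3 p4. (p1, p2, p3, p4) \<in> X \<longrightarrow> a = cartan p1 p2 p3)))
       \<and> (\<exists>B0. bij_betw B0 F4'' C'_Hstar
              \<and> (\<forall>X\<in>F4''. \<forall>a z t. a \<in> {-pi/2<..<pi/2} \<and> NF a z t \<in> X \<longrightarrow>
                    B0 X = (z, t, exp (tan a))))"
proof -
  let ?I = "{-pi/2<..<pi/2} :: real set"
  have uniq: "a = a' \<and> z = z' \<and> t = t'"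
    if "X \<in> F4''" "a \<in> ?I" "NF a z t \<in> X" "a' \<in> ?I" "NF a' z' t' \<in> X" for X a z t a' z' t'
    using NF_unique[OF class_equiv[OF that(1) that(3) that(5)] that(2) that(4)] .
  have P1: "\<exists>!(a, z, t). a \<in> ?I \<and> NF a z t \<in> X" if X: "X \<in> F4''" for X
  proof -
    obtain a z t where azt: "a \<in> ?I" "NF a z t \<in> X" using ex_NF[OF X] by blast
    show ?thesis
    proof (rule ex1I[of _ "(a,z,t)"])
      show "case (a, z, t) of (a, z, t) \<Rightarrow> a \<in> ?I \<and> NF a z t \<in> X" using azt by simp
      fix y assume "case y of (a, z, t) \<Rightarrow> a \<in> ?I \<and> NF a z t \<in> X"
      then show "y = (a, z, t)" using uniq[OF X azt] by (cases y) auto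
    qed
  qed
  have P2: "z \<noteq> 0 \<and> t \<noteq> (cmod z)\<^sup>2 * tan a \<and> (\<forall>p1 p2 p3 p4. (p1, p2, p3, p4) \<in> X \<longrightarrow> a = cartan p1 p2 p3)"
    if X: "X \<in> F4''" and a: "a \<in> ?I" and n: "NF a z t \<in> X" for X a z t
  proof (intro conjI allI impI)
    show "z \<noteq> 0" "t \<noteq> (cmod z)\<^sup>2 * tan a" using C4_NF[OF class_sub[OF X n]] by auto
    fix p1 p2 p3 p4 assume p: "(p1, p2, p3, p4) \<in> X"
    obtain A where A: "hp A" "acts A p1 (Some (1, tan a))" "acts A p2 None" "acts A p3 (Some (0,0))"
      using class_equiv[OF X p n] unfolding NF_def pu_equiv_iff by blast
    show "a = cartan p1 p2 p3" using cartan_inv[OF A] cartan_NF[OF a] by simp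
  qed
  define B0 where "B0 X = (case (THE y. case y of (a,z,t) \<Rightarrow> a \<in> ?I \<and> NF a z t \<in> X) of (a,z,t) \<Rightarrow> (z,t,exp (tan a)))" for X
  have B0v: "B0 X = (z, t, exp (tan a))" if X: "X \<in> F4''" and a: "a \<in> ?I" and n: "NF a z t \<in> X" for X a z t
  proof -
    have "(THE y. case y of (a,z,t) \<Rightarrow> a \<in> ?I \<and> NF a z t \<in> X) = (a,z,t)"
    proof (rule the_equality)
      show "case (a, z, t) of (a, z, t) \<Rightarrow> a \<in> ?I \<and> NF a z t \<in> X" using a n by simp
      fix y assume "case y of (a, z, t) \<Rightarrow> a \<in> ?I \<and> NF a z t \<in> X"
      then show "y = (a, z, t)" using uniq[OF X a n] by (cases y) auto
    qed
    then show ?thesis by (simp add: B0_def)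
  qed
  have bij: "bij_betw B0 F4'' C'_Hstar"
  proof (rule bij_betwI')
    fix X Y assume X: "X \<in> F4''" and Y: "Y \<in> F4''"
    obtain a z t where azt: "a \<in> ?I" "NF a z t \<in> X" using ex_NF[OF X] by blast
    obtain a' z' t' where azt': "a' \<in> ?I" "NF a' z' t' \<in> Y" using ex_NF[OF Y] by blast
    show "(B0 X = B0 Y) = (X = Y)"
    proof
      assume "B0 X = B0 Y"
      then have e: "z = z'" "t = t'" "exp (tan a) = exp (tan a')" using B0v[OF X azt] B0v[OF Y azt'] by auto
      then have "tan a = tan a'" by simp
      then have "arctan (tan a) = arctan (tan a')" by simp
      then have "a = a'" using azt(1) azt'(1) by (simp add: arctan_tan)
      then have "NF a z t \<in> X \<inter> Y" using azt azt' e by simp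
      then show "X = Y" using quotient_disj[OF equiv_RR, of X Y] X Y unfolding F4_RR by blast
    qed simp
  next
    fix X assume X: "X \<in> F4''"
    obtain a z t where azt: "a \<in> ?I" "NF a z t \<in> X" using ex_NF[OF X] by blast
    have c: "z \<noteq> 0" "t \<noteq> (cmod z)\<^sup>2 * tan a" using P2[OF X azt] by auto
    have "(cmod z)\<^sup>2 > 0" using c(1) by simp
    then have "tan a \<noteq> t / (cmod z)\<^sup>2" using c(2) by (auto simp: field_simps)
    then show "B0 X \<in> C'_Hstar" using B0v[OF X azt] c(1) by (simp add: C'_Hstar_def)
  next
    fix y assume y: "y \<in> C'_Hstar"
    obtain z t r where yz: "y = (z,t,r)" by (cases y) auto
    have c: "z \<noteq> 0" "r > 0" "ln r \<noteq> t / (cmod z)\<^sup>2" using y yz by (auto simp: C'_Hstar_def)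
    define a where "a = arctan (ln r)"
    have ta: "tan a = ln r" by (simp add: a_def tan_arctan)
    have aI: "a \<in> ?I" using arctan_lbound[of "ln r"] arctan_ubound[of "ln r"] by (simp add: a_def)
    have "(cmod z)\<^sup>2 > 0" using c(1) by simp
    then have "t \<noteq> (cmod z)\<^sup>2 * tan a" using c(3) ta by (auto simp: field_simps)
    then have NC: "NF a z t \<in> C4''" using NF_C4 c(1) by blast
    define X where "X = RR``{NF a z t}"
    have X: "X \<in> F4''" unfolding X_def F4_RR by (rule quotientI[OF NC])
    have "NF a z t \<in> X" unfolding X_def by (rule equiv_class_self[OF equiv_RR NC])
    then have "B0 X = y" using B0v[OF X aI] ta c(2) yz by simp
    then show "\<exists>X\<in>F4''. y = B0 X" using X by blast
  qed
  show ?thesis using P1 P2 bij B0v by blast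
qed

end
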